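(* $\frac{2}{11}\le\gamma^{L-LD}(\mathcal{T})\le\frac29$: every local locating-dominating code in the triangular grid has density at least $2/11$, and there is a local locating-dominating code in the triangular grid of density $2/9$.
   Context: The triangular grid $\mathcal{T}$ has vertex set $\mathbb{Z}^2$, with $\mathbf{u},\mathbf{v}$ adjacent iff $\mathbf{u}-\mathbf{v}\in\{(\pm1,0),(0,\pm1),(1,1),(-1,-1)\}$. For a nonempty $C\subseteq\mathbb{Z}^2$ and vertex $\mathbf{u}$, $I(\mathbf{u})=N[\mathbf{u}]\cap C$ where $N[\mathbf{u}]$ is the closed neighbourhood. $C$ is a local locating-dominating code if $I(\mathbf{u})\ne\emptyset$ for all $\mathbf{u}$ and $I(\mathbf{u})\ne I(\mathbf{v})$ for all adjacent $\mathbf{u},\mathbf{v}\notin C$. The density of $C$ is $D(C)=\limsup_{n\to\infty}|C\cap Q_n|/|Q_n|$ with $Q_n=\{(i,j)\in\mathbb{Z}^2:|i|\le n,|j|\le n\}$. $\gamma^{L-LD}(G)$ denotes the infimum of densities of local locating-dominating codes in $G$. *)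

theory Defs
  imports "HOL-Analysis.Analysis"
begin

definition tri_adj :: "int \<times> int \<Rightarrow> int \<times> int \<Rightarrow> bool" where
  "tri_adj u v \<longleftrightarrow> (fst u - fst v, snd u - snd v) \<in>
     {(1,0), (-1,0), (0,1), (0,-1), (1,1), (-1,-1)}"

definition tri_closed_nbhd :: "int \<times> int \<Rightarrow> (int \<times> int) set" where
  "tri_closed_nbhd u = insert u {v. tri_adj u v}"

definition I_set :: "(int \<times> int) set \<Rightarrow> int \<times> int \<Rightarrow> (int \<times> int) set" where
  "I_set C u = tri_closed_nbhd u \<inter> C"

definition local_LD_code :: "(int \<times> int) set \<Rightarrow> bool" where
  "local_LD_code C \<longleftrightarrow> C \<noteq> {} \<and>
     (\<forall>u. I_set C u \<noteq> {}) \<and>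
     (\<forall>u v. tri_adj u v \<and> u \<notin> C \<and> v \<notin> C \<longrightarrow> I_set C u \<noteq> I_set C v)"

definition Q :: "nat \<Rightarrow> (int \<times> int) set" where
  "Q n = {-int n..int n} \<times> {-int n..int n}"

definition density :: "(int \<times> int) set \<Rightarrow> ereal" where
  "density C = limsup (\<lambda>n. ereal (real (card (C \<inter> Q n)) / real (card (Q n))))"

definition gamma_LLD :: ereal where
  "gamma_LLD = Inf (density ` {C. local_LD_code C})"

end

theory Submission
  imports Defs "HOL-Real_Asymp.Real_Asymp"
begin

definition Dset :: "(int\<times>int) set" where
  "Dset = {(1,0), (-1,0), (0,1), (0,-1), (1,1), (-1,-1)}"
definition Nset :: "(int\<times>int) set" where "Nset = insert (0,0) Dset"

lemma S_neg: "((p::int),(q::int)) \<in> Dset \<longleftrightarrow> (-p,-q) \<in> Dset"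
  unfolding Dset_def by (simp add: minus_equation_iff; blast)

lemma adj_iff: "tri_adj u v \<longleftrightarrow> (fst v - fst u, snd v - snd u) \<in> Dset"
proof -
  have "tri_adj u v \<longleftrightarrow> (fst u - fst v, snd u - snd v) \<in> Dset"
    unfolding tri_adj_def Dset_def by (rule refl)
  also have "\<dots> \<longleftrightarrow> (-(fst u - fst v), -(snd u - snd v)) \<in> Dset" by (rule S_neg)
  finally show ?thesis by simp
qed

lemma adj_sym: "tri_adj u v \<longleftrightarrow> tri_adj v u"
proof -
  have "tri_adj v u \<longleftrightarrow> (fst v - fst u, snd v - snd u) \<in> Dset"
    unfolding tri_adj_def Dset_def by (rule refl)
  thus ?thesis using adj_iff by simp
qed

lemma nb_iff: "w \<in> tri_closed_nbhd u \<longleftrightarrow> (fst w - fst u, snd w - snd u) \<in> Nset"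
proof -
  have "w = u \<longleftrightarrow> (fst w - fst u, snd w - snd u) = (0,0)" by (cases u; cases w) simp
  thus ?thesis unfolding tri_closed_nbhd_def Nset_def adj_iff by simp
qed

lemma nbhd_image: "tri_closed_nbhd u = (\<lambda>d. (fst u + fst d, snd u + snd d)) ` Nset"
proof (rule set_eqI)
  fix w
  show "w \<in> tri_closed_nbhd u \<longleftrightarrow> w \<in> (\<lambda>d. (fst u + fst d, snd u + snd d)) ` Nset"
    unfolding nb_iff image_iff
    apply (rule iffI)
     apply (rule bexI[of _ "(fst w - fst u, snd w - snd u)"]; simp)
    apply (auto)
    done
qed

lemma nbhd_explicit: "tri_closed_nbhd (x,y) =
   {(x,y),(x+1,y),(x+1,y+1),(x,y+1),(x-1,y),(x-1,y-1),(x,y-1)}"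
  unfolding nbhd_image Nset_def Dset_def by auto
definition memC :: "int \<Rightarrow> int \<Rightarrow> int \<Rightarrow> int \<Rightarrow> bool" where
  "memC r s i j \<longleftrightarrow> (r+i) mod 3 = 0 \<and> (s+j) mod 3 \<noteq> 2"

lemma finite_nbhd: "finite (tri_closed_nbhd u)"
  by (cases u) (simp add: nbhd_explicit)

lemma self_in: "u \<in> tri_closed_nbhd u" unfolding tri_closed_nbhd_def by simp

lemma nb_sym: "v \<in> tri_closed_nbhd u \<longleftrightarrow> u \<in> tri_closed_nbhd v"
  unfolding tri_closed_nbhd_def using adj_sym by auto

definition f :: "(int\<times>int) set \<Rightarrow> int\<times>int \<Rightarrow> real" where
  "f C u = 1 / real (card (I_set C u))"

lemma f_nonneg: "f C u \<ge> 0" unfolding f_def by simp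

lemma finite_I: "finite (I_set C u)" unfolding I_set_def using finite_nbhd by simp

lemma f_le: assumes "c \<in> C" "c \<in> tri_closed_nbhd u"
  shows "f C u \<le> (if I_set C u = {c} then 1 else 1/2)"
proof -
  have cI: "c \<in> I_set C u" using assms unfolding I_set_def by simp
  show ?thesis
  proof (cases "I_set C u = {c}")
    case True then show ?thesis unfolding f_def by simp
  next
    case False
    then obtain d where "d \<in> I_set C u" "d \<noteq> c" using cI by blast
    hence "card {c,d} \<le> card (I_set C u)" using cI finite_I by (intro card_mono) auto
    hence "2 \<le> card (I_set C u)" using \<open>d \<noteq> c\<close> by simp
    hence "real 2 \<le> real (card (I_set C u))" by linarith
    thus ?thesis using False unfolding f_def by (simp add: field_simps)
  qed
qed

lemma pair_not: assumes "local_LD_code C" "tri_adj p q" "p \<noteq> c" "q \<noteq> c"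
  shows "\<not> (I_set C p = {c} \<and> I_set C q = {c})"
proof
  assume h: "I_set C p = {c} \<and> I_set C q = {c}"
  have "p \<notin> C" using h self_in[of p] assms(3) unfolding I_set_def by blast
  moreover have "q \<notin> C" using h self_in[of q] assms(4) unfolding I_set_def by blast
  ultimately have "I_set C p \<noteq> I_set C q" using assms(1,2) unfolding local_LD_code_def by blast
  thus False using h by simp
qed

lemma arith7: "\<not>(b1\<and>b2) \<Longrightarrow> \<not>(b2\<and>b3) \<Longrightarrow> \<not>(b3\<and>b4) \<Longrightarrow> \<not>(b4\<and>b5) \<Longrightarrow> \<not>(b5\<and>b6) \<Longrightarrow> \<not>(b6\<and>b1) \<Longrightarrow>
  (if b0 then 1 else 1/2) + ((if b1 then 1 else 1/2) + ((if b2 then 1 else 1/2) + ((if b3 then 1 else 1/2) +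
  ((if b4 then 1 else 1/2) + ((if b5 then 1 else 1/2) + (if b6 then 1 else 1/2)))))) \<le> (11/2::real)"
  by (cases b0; cases b1; cases b2; cases b3; cases b4; cases b5; cases b6) auto

lemma share: assumes "local_LD_code C" "c \<in> C"
  shows "(\<Sum>u\<in>tri_closed_nbhd c. f C u) \<le> 11/2"
proof -
  obtain x y where c: "c = (x,y)" by (cases c)
  define g where "g u = (if I_set C u = {c} then 1 else (1/2::real))" for u
  have "(\<Sum>u\<in>tri_closed_nbhd c. f C u) \<le> (\<Sum>u\<in>tri_closed_nbhd c. g u)"
    using f_le[OF assms(2)] nb_sym unfolding g_def by (intro sum_mono) auto
  also have "(\<Sum>u\<in>tri_closed_nbhd c. g u) = g (x,y) + (g (x+1,y) + (g (x+1,y+1) + (g (x,y+1) +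
     (g (x-1,y) + (g (x-1,y-1) + g (x,y-1))))))"
    unfolding c nbhd_explicit by simp
  also have "\<dots> \<le> 11/2"
    unfolding g_def
    apply (rule arith7)
    apply (rule pair_not[OF assms(1)]; simp add: c tri_adj_def)+
    done
  finally show ?thesis .
qed



lemma card_Q: "card (Q n) = (2*n+1)^2"
proof -
  have "card {-int n..int n} = 2*n+1" by simp
  thus ?thesis unfolding Q_def by (simp add: card_cartesian_product power2_eq_square)
qed

lemma finite_Q: "finite (Q n)" unfolding Q_def by simp

lemma count_lower: assumes "local_LD_code C"
  shows "real (card (Q n)) \<le> 11/2 * real (card (C \<inter> Q (Suc n)))"
proof -
  let ?D = "C \<inter> Q (Suc n)"
  have finD: "finite ?D" using finite_Q by simp
  have IQ: "I_set C u \<subseteq> ?D" if "u \<in> Q n" for u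
  proof -
    obtain x y where u: "u = (x,y)" by (cases u)
    show ?thesis using that unfolding u I_set_def nbhd_explicit Q_def by auto
  qed
  have one: "(\<Sum>c\<in>?D. if c \<in> I_set C u then f C u else 0) = 1" if "u \<in> Q n" for u
  proof -
    have "(\<Sum>c\<in>?D. if c \<in> I_set C u then f C u else 0) = (\<Sum>c\<in>?D \<inter> I_set C u. f C u)"
      by (rule sum.inter_restrict[symmetric, OF finD])
    also have "?D \<inter> I_set C u = I_set C u" using IQ[OF that] by blast
    also have "(\<Sum>c\<in>I_set C u. f C u) = real (card (I_set C u)) * f C u" by simp
    also have "\<dots> = 1"
    proof -
      have "I_set C u \<noteq> {}" using assms unfolding local_LD_code_def by blast
      hence "card (I_set C u) > 0" using finite_I card_gt_0_iff by blast
      thus ?thesis unfolding f_def by simp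
    qed
    finally show ?thesis .
  qed
  have "real (card (Q n)) = (\<Sum>u\<in>Q n. (1::real))" by simp
  also have "\<dots> = (\<Sum>u\<in>Q n. \<Sum>c\<in>?D. if c \<in> I_set C u then f C u else 0)"
    by (rule sum.cong[OF refl], rule sym, rule one)
  also have "\<dots> = (\<Sum>c\<in>?D. \<Sum>u\<in>Q n. if c \<in> I_set C u then f C u else 0)"
    by (rule sum.swap)
  also have "\<dots> \<le> (\<Sum>c\<in>?D. 11/2)"
  proof (rule sum_mono)
    fix c assume cD: "c \<in> ?D"
    have "(\<Sum>u\<in>Q n. if c \<in> I_set C u then f C u else 0) \<le> (\<Sum>u\<in>Q n. if u \<in> tri_closed_nbhd c then f C u else 0)"
      using nb_sym f_nonneg unfolding I_set_def by (intro sum_mono) auto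
    also have "\<dots> = (\<Sum>u\<in>Q n \<inter> tri_closed_nbhd c. f C u)"
      by (rule sum.inter_restrict[symmetric, OF finite_Q])
    also have "\<dots> \<le> (\<Sum>u\<in>tri_closed_nbhd c. f C u)"
      using finite_nbhd f_nonneg by (intro sum_mono2) auto
    also have "\<dots> \<le> 11/2" using share[OF assms] cD by blast
    finally show "(\<Sum>u\<in>Q n. if c \<in> I_set C u then f C u else 0) \<le> 11/2" .
  qed
  also have "\<dots> = 11/2 * real (card ?D)" by simp
  finally show ?thesis .
qed

definition Bw :: "int\<times>int \<Rightarrow> (int\<times>int) set" where
  "Bw u = {fst u..fst u+2} \<times> {snd u..snd u+2}"
definition Bm :: "int\<times>int \<Rightarrow> (int\<times>int) set" where
  "Bm c = {fst c-2..fst c} \<times> {snd c-2..snd c}"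

lemma B_iff: "c \<in> Bw u \<longleftrightarrow> u \<in> Bm c"
  unfolding Bw_def Bm_def by (cases u; cases c) auto

lemma card_Bm: "card (Bm c) = 9"
  unfolding Bm_def by (simp add: card_cartesian_product)

lemma swap_count:
  fixes C :: "(int\<times>int) set"
  assumes "finite A" "finite D" "\<And>u. u \<in> A \<Longrightarrow> Bw u \<subseteq> D"
  shows "(\<Sum>u\<in>A. real (card (Bw u \<inter> C))) = (\<Sum>c\<in>C \<inter> D. real (card (A \<inter> Bm c)))"
proof -
  have finCD: "finite (C \<inter> D)" using assms(2) by simp
  have "(\<Sum>u\<in>A. real (card (Bw u \<inter> C))) = (\<Sum>u\<in>A. \<Sum>c\<in>C \<inter> D. if c \<in> Bw u then 1 else 0)"
  proof (intro sum.cong refl)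
    fix u assume "u \<in> A"
    have "(\<Sum>c\<in>C \<inter> D. if c \<in> Bw u then 1 else (0::real)) = (\<Sum>c\<in>C \<inter> D \<inter> Bw u. 1)"
      by (rule sum.inter_restrict[symmetric, OF finCD])
    also have "C \<inter> D \<inter> Bw u = Bw u \<inter> C" using assms(3)[OF \<open>u\<in>A\<close>] by blast
    finally show "real (card (Bw u \<inter> C)) = (\<Sum>c\<in>C \<inter> D. if c \<in> Bw u then 1 else 0)" by simp
  qed
  also have "\<dots> = (\<Sum>c\<in>C \<inter> D. \<Sum>u\<in>A. if c \<in> Bw u then 1 else 0)" by (rule sum.swap)
  also have "\<dots> = (\<Sum>c\<in>C \<inter> D. real (card (A \<inter> Bm c)))"
  proof (intro sum.cong refl)
    fix c
    have "(\<Sum>u\<in>A. if c \<in> Bw u then 1 else (0::real)) = (\<Sum>u\<in>A. if u \<in> Bm c then 1 else 0)"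
      by (rule sum.cong[OF refl]) (simp only: B_iff)
    also have "\<dots> = (\<Sum>u\<in>A \<inter> Bm c. 1)" by (rule sum.inter_restrict[symmetric, OF assms(1)])
    finally show "(\<Sum>u\<in>A. if c \<in> Bw u then 1 else (0::real)) = real (card (A \<inter> Bm c))" by simp
  qed
  finally show ?thesis .
qed



lemma F1': "r\<in>{0,1,2} \<Longrightarrow> s\<in>{0,1,2} \<Longrightarrow> \<exists>p\<in>Nset. memC r s (fst p) (snd p)"
  apply (simp only: insert_iff empty_iff)
  apply (elim disjE)
  apply (simp_all add: Nset_def Dset_def memC_def)
  done

lemma F2': "r\<in>{0,1,2} \<Longrightarrow> s\<in>{0,1,2} \<Longrightarrow> (a,b)\<in>Dset \<Longrightarrow> \<not> memC r s 0 0 \<Longrightarrow> \<not> memC r s a b \<Longrightarrow>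
   (\<exists>i\<in>{-2,-1,0,1,2}. \<exists>j\<in>{-2,-1,0,1,2}. memC r s i j \<and> (((i,j)\<in>Nset) \<noteq> ((i-a,j-b)\<in>Nset)))"
  unfolding Dset_def
  apply (simp only: insert_iff empty_iff prod.inject)
  apply (elim disjE conjE)
  apply (simp_all add: Nset_def Dset_def memC_def)
  done

lemma F3': "r\<in>{0,1,2} \<Longrightarrow> s\<in>{0,1,2} \<Longrightarrow>
   (\<Sum>i\<in>{0,1,2::int}. \<Sum>j\<in>{0,1,2::int}. if memC r s i j then 1 else 0) = (2::real)"
  apply (simp only: insert_iff empty_iff)
  apply (elim disjE)
  apply (simp_all add: memC_def)
  done

definition C0 :: "(int\<times>int) set" where "C0 = {p. fst p mod 3 = 0 \<and> snd p mod 3 \<noteq> 2}"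

lemma C0_shift: "((x+i, y+j) \<in> C0) = memC (x mod 3) (y mod 3) i j"
  unfolding C0_def memC_def by (simp add: mod_add_left_eq)

lemma mod3: "(x::int) mod 3 \<in> {0,1,2}" by auto

lemma C0_code: "local_LD_code C0"
  unfolding local_LD_code_def
proof (intro conjI allI impI)
  have "(0,0) \<in> C0" unfolding C0_def by simp
  thus "C0 \<noteq> {}" by blast
next
  fix u :: "int\<times>int"
  obtain x y where u: "u = (x,y)" by (cases u)
  obtain p where p: "p\<in>Nset" "memC (x mod 3) (y mod 3) (fst p) (snd p)"
    using F1'[OF mod3[of x] mod3[of y]] by blast
  have "(x+fst p,y+snd p) \<in> C0" using C0_shift[of x "fst p" y "snd p"] p by simp
  moreover have "(x+fst p,y+snd p) \<in> tri_closed_nbhd u" using nb_iff[of "(x+fst p,y+snd p)" u] u p by simp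
  ultimately have "(x+fst p,y+snd p) \<in> I_set C0 u" unfolding I_set_def by blast
  thus "I_set C0 u \<noteq> {}" by blast
next
  fix u v :: "int\<times>int"
  assume h: "tri_adj u v \<and> u \<notin> C0 \<and> v \<notin> C0"
  obtain x y where u: "u = (x,y)" by (cases u)
  define a where "a = fst v - x"
  define b where "b = snd v - y"
  have v: "v = (x+a, y+b)" unfolding a_def b_def by simp
  have ab: "(a,b) \<in> Dset" using h adj_iff[of u v] u unfolding a_def b_def by simp
  have n0: "\<not> memC (x mod 3) (y mod 3) 0 0" using h u C0_shift[of x 0 y 0] by simp
  have n1: "\<not> memC (x mod 3) (y mod 3) a b" using h v C0_shift[of x a y b] by simp
  from F2'[OF mod3[of x] mod3[of y] ab n0 n1] obtain i j where
    ij: "memC (x mod 3) (y mod 3) i j" "((i,j)\<in>Nset) \<noteq> ((i-a,j-b)\<in>Nset)"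
    by blast
  have w: "(x+i,y+j) \<in> C0" using ij C0_shift by simp
  have "((x+i,y+j) \<in> tri_closed_nbhd u) \<noteq> ((x+i,y+j) \<in> tri_closed_nbhd v)"
    using ij(2) nb_iff[of "(x+i,y+j)" u] nb_iff[of "(x+i,y+j)" v] u v by simp
  thus "I_set C0 u \<noteq> I_set C0 v" unfolding I_set_def using w by blast
qed


lemma int3: "{x..x+2::int} = (\<lambda>i. x+i) ` {0,1,2}"
proof -
  have "{x..x+2::int} = {x, x+1, x+2}" by auto
  thus ?thesis by simp
qed

lemma win: "real (card (Bw u \<inter> C0)) = 2"
proof -
  obtain x y where u: "u = (x,y)" by (cases u)
  have fB: "finite (Bw u)" unfolding Bw_def by simp
  have "real (card (Bw u \<inter> C0)) = (\<Sum>w\<in>Bw u \<inter> C0. 1)" by simp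
  also have "\<dots> = (\<Sum>w\<in>Bw u. if w \<in> C0 then 1 else 0)" by (rule sum.inter_restrict[OF fB])
  also have "\<dots> = (\<Sum>a\<in>{x..x+2}. \<Sum>b\<in>{y..y+2}. if (a,b) \<in> C0 then 1 else 0)"
    unfolding Bw_def u by (simp add: sum.cartesian_product)
  also have "\<dots> = (\<Sum>i\<in>{0,1,2}. \<Sum>j\<in>{0,1,2}. if (x+i,y+j) \<in> C0 then 1 else 0)"
    unfolding int3 by (simp add: sum.reindex inj_on_def)
  also have "\<dots> = (\<Sum>i\<in>{0,1,2::int}. \<Sum>j\<in>{0,1,2::int}. if memC (x mod 3) (y mod 3) i j then 1 else 0)"
    by (simp only: C0_shift)
  also have "\<dots> = 2" by (rule F3'[OF mod3 mod3])
  finally show ?thesis .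
qed

lemma Q_mono: "n \<le> m \<Longrightarrow> Q n \<subseteq> Q m"
  unfolding Q_def by auto

lemma Bw_sub: "u \<in> Q n \<Longrightarrow> Bw u \<subseteq> Q (n+2)"
  unfolding Q_def Bw_def by (cases u) auto

lemma Bm_sub: "c \<in> Q n \<Longrightarrow> Bm c \<subseteq> Q (n+2)"
  unfolding Q_def Bm_def by (cases c) auto

lemma cu1: "2 * real (card (Q n)) \<le> 9 * real (card (C0 \<inter> Q (n+2)))"
proof -
  have "2 * real (card (Q n)) = (\<Sum>u\<in>Q n. real (card (Bw u \<inter> C0)))" using win by simp
  also have "\<dots> = (\<Sum>c\<in>C0 \<inter> Q (n+2). real (card (Q n \<inter> Bm c)))"
    by (rule swap_count[OF finite_Q finite_Q Bw_sub])
  also have "\<dots> \<le> (\<Sum>c\<in>C0 \<inter> Q (n+2). 9)"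
  proof (rule sum_mono)
    fix c
    have "card (Q n \<inter> Bm c) \<le> card (Bm c)" unfolding Bm_def by (intro card_mono) auto
    thus "real (card (Q n \<inter> Bm c)) \<le> 9" using card_Bm by simp
  qed
  also have "\<dots> = 9 * real (card (C0 \<inter> Q (n+2)))" by simp
  finally show ?thesis .
qed

lemma cu2: "9 * real (card (C0 \<inter> Q n)) \<le> 2 * real (card (Q (n+2)))"
proof -
  have "9 * real (card (C0 \<inter> Q n)) = (\<Sum>c\<in>C0 \<inter> Q n. real (card (Q (n+2) \<inter> Bm c)))"
  proof -
    have "(\<Sum>c\<in>C0 \<inter> Q n. real (card (Q (n+2) \<inter> Bm c))) = (\<Sum>c\<in>C0 \<inter> Q n. 9)"
    proof (rule sum.cong[OF refl])
      fix c assume "c \<in> C0 \<inter> Q n"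
      hence "Q (n+2) \<inter> Bm c = Bm c" using Bm_sub by blast
      thus "real (card (Q (n+2) \<inter> Bm c)) = 9" using card_Bm by simp
    qed
    thus ?thesis by simp
  qed
  also have "\<dots> \<le> (\<Sum>c\<in>C0 \<inter> Q (n+2+2). real (card (Q (n+2) \<inter> Bm c)))"
    using Q_mono[of n "n+2+2"] finite_Q[of "n+2+2"] by (intro sum_mono2) auto
  also have "\<dots> = (\<Sum>u\<in>Q (n+2). real (card (Bw u \<inter> C0)))"
    by (rule swap_count[OF finite_Q finite_Q Bw_sub, symmetric])
  also have "\<dots> = 2 * real (card (Q (n+2)))" using win by simp
  finally show ?thesis .
qed

lemma realQ: "real (card (Q n)) = (2 * real n + 1)^2"
  unfolding card_Q by simp

lemma limsup_ge:
  assumes "eventually (\<lambda>n. l n \<le> g n) sequentially" "(l \<longlongrightarrow> L) sequentially"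
  shows "ereal L \<le> limsup (\<lambda>n. ereal (g n))"
proof -
  have "limsup (\<lambda>n. ereal (l n)) = ereal L"
    by (rule lim_imp_Limsup) (simp_all add: assms(2))
  moreover have "limsup (\<lambda>n. ereal (l n)) \<le> limsup (\<lambda>n. ereal (g n))"
    by (rule Limsup_mono) (use assms(1) in \<open>auto elim: eventually_mono\<close>)
  ultimately show ?thesis by simp
qed

lemma limsup_le:
  assumes "eventually (\<lambda>n. g n \<le> l n) sequentially" "(l \<longlongrightarrow> L) sequentially"
  shows "limsup (\<lambda>n. ereal (g n)) \<le> ereal L"
proof -
  have "limsup (\<lambda>n. ereal (l n)) = ereal L"
    by (rule lim_imp_Limsup) (simp_all add: assms(2))
  moreover have "limsup (\<lambda>n. ereal (g n)) \<le> limsup (\<lambda>n. ereal (l n))"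
    by (rule Limsup_mono) (use assms(1) in \<open>auto elim: eventually_mono\<close>)
  ultimately show ?thesis by simp
qed

lemma dens_lower: assumes "local_LD_code C" shows "density C \<ge> ereal (2/11)"
  unfolding density_def
proof (rule limsup_ge)
  show "((\<lambda>n. 2/11 * (2 * real n - 1)^2 / (2 * real n + 1)^2) \<longlongrightarrow> 2/11) sequentially"
    by real_asymp
  show "eventually (\<lambda>n. 2/11 * (2 * real n - 1)^2 / (2 * real n + 1)^2
          \<le> real (card (C \<inter> Q n)) / real (card (Q n))) sequentially"
  proof (rule eventually_sequentiallyI[of 1])
    fix n :: nat assume n: "1 \<le> n"
    then obtain m where m: "n = Suc m" by (cases n) auto
    have "real (card (Q m)) \<le> 11/2 * real (card (C \<inter> Q n))" using count_lower[OF assms, of m] m by simp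
    moreover have "real (card (Q m)) = (2 * real n - 1)^2" unfolding realQ m by (simp add: algebra_simps)
    ultimately have "2/11 * (2 * real n - 1)^2 \<le> real (card (C \<inter> Q n))" by simp
    thus "2/11 * (2 * real n - 1)^2 / (2 * real n + 1)^2 \<le> real (card (C \<inter> Q n)) / real (card (Q n))"
      unfolding realQ by (intro divide_right_mono) auto
  qed
qed

lemma dens_C0: "density C0 = ereal (2/9)"
  unfolding density_def
proof (rule antisym)
  show "limsup (\<lambda>n. ereal (real (card (C0 \<inter> Q n)) / real (card (Q n)))) \<le> ereal (2/9)"
  proof (rule limsup_le)
    show "((\<lambda>n. 2/9 * (2 * real n + 5)^2 / (2 * real n + 1)^2) \<longlongrightarrow> 2/9) sequentially"
      by real_asymp
    show "eventually (\<lambda>n. real (card (C0 \<inter> Q n)) / real (card (Q n))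
        \<le> 2/9 * (2 * real n + 5)^2 / (2 * real n + 1)^2) sequentially"
    proof (rule always_eventually, rule allI)
      fix n
      have "real (card (Q (n+2))) = (2 * real n + 5)^2" unfolding realQ by (simp add: algebra_simps)
      hence "real (card (C0 \<inter> Q n)) \<le> 2/9 * (2 * real n + 5)^2" using cu2[of n] by simp
      thus "real (card (C0 \<inter> Q n)) / real (card (Q n)) \<le> 2/9 * (2 * real n + 5)^2 / (2 * real n + 1)^2"
        unfolding realQ by (intro divide_right_mono) auto
    qed
  qed
  show "ereal (2/9) \<le> limsup (\<lambda>n. ereal (real (card (C0 \<inter> Q n)) / real (card (Q n))))"
  proof (rule limsup_ge)
    show "((\<lambda>n. 2/9 * (2 * real n - 3)^2 / (2 * real n + 1)^2) \<longlongrightarrow> 2/9) sequentially"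
      by real_asymp
    show "eventually (\<lambda>n. 2/9 * (2 * real n - 3)^2 / (2 * real n + 1)^2
          \<le> real (card (C0 \<inter> Q n)) / real (card (Q n))) sequentially"
    proof (rule eventually_sequentiallyI[of 2])
      fix n :: nat assume n: "2 \<le> n"
      then obtain m where m: "n = m + 2" by (metis le_add_diff_inverse2)
      have "real (card (Q m)) = (2 * real n - 3)^2" unfolding realQ m by (simp add: algebra_simps)
      hence "2/9 * (2 * real n - 3)^2 \<le> real (card (C0 \<inter> Q n))" using cu1[of m] m by simp
      thus "2/9 * (2 * real n - 3)^2 / (2 * real n + 1)^2 \<le> real (card (C0 \<inter> Q n)) / real (card (Q n))"
        unfolding realQ by (intro divide_right_mono) auto
    qed
  qed
qed

theorem mainTheorem15:
  shows "(\<forall>C. local_LD_code C \<longrightarrow> density C \<ge> ereal (2/11)) \<and>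
         (\<exists>C. local_LD_code C \<and> density C = ereal (2/9)) \<and>
         ereal (2/11) \<le> gamma_LLD \<and> gamma_LLD \<le> ereal (2/9)"
proof (intro conjI)
  show "\<forall>C. local_LD_code C \<longrightarrow> density C \<ge> ereal (2/11)" using dens_lower by blast
  show "\<exists>C. local_LD_code C \<and> density C = ereal (2/9)" using C0_code dens_C0 by blast
  show "ereal (2/11) \<le> gamma_LLD" unfolding gamma_LLD_def
    by (rule Inf_greatest) (auto intro: dens_lower)
  have "gamma_LLD \<le> density C0" unfolding gamma_LLD_def
    by (rule Inf_lower) (use C0_code in blast)
  thus "gamma_LLD \<le> ereal (2/9)" using dens_C0 by simp
qed

end
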